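(* Let $0<\alpha_1,\alpha_2\leq 1$, $\theta=\frac{\alpha_2-\alpha_1}{\alpha_2+\alpha_1}$, $c=e^{\pi i\theta}$, $G(z)=\left(\frac{1+cz}{1-z}\right)^{(\alpha_1+\alpha_2)/2}$ on $\Delta$ (principal branch, $G(0)=1$), and $\widetilde{G}(z)=\int_0^z\frac{G(t)-1}{t}\,dt$. If $f\in\mathcal{S}^*_t(\alpha_1,\alpha_2)$, then $$\frac{f(z)}{z}\prec\exp\widetilde{G}(z)\quad(z\in\Delta).$$
   Context: $\Delta=\{z\in\mathbb{C}:|z|<1\}$. $\mathcal{S}^*_t(\alpha_1,\alpha_2)$ denotes the class of functions $f$ analytic in $\Delta$ with $f(0)=0=f'(0)-1$ satisfying $-\frac{\pi\alpha_1}{2}<\arg\left\{\frac{zf'(z)}{f(z)}\right\}<\frac{\pi\alpha_2}{2}$ for all $z\in\Delta$. For analytic $f,g$ in $\Delta$, $f\prec g$ means there is an analytic $w$ in $\Delta$ with $w(0)=0$, $|w(z)|<1$ and $f=g\circ w$. *)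

theory Defs
  imports "HOL-Complex_Analysis.Complex_Analysis"
begin

text \<open>The class S*_t(a1,a2): normalized analytic functions on the unit disc with
  -pi a1/2 < arg (z f'(z)/f(z)) < pi a2/2.  At z = 0 the quotient z f'(z)/f(z) is
  understood as its limit 1 (arg 0), so the condition is imposed for z \<noteq> 0,
  where the quotient must be a well-defined nonzero number.\<close>
definition strongly_starlike_t :: "real \<Rightarrow> real \<Rightarrow> (complex \<Rightarrow> complex) \<Rightarrow> bool" where
  "strongly_starlike_t a1 a2 f \<longleftrightarrow>
     f holomorphic_on ball 0 1 \<and> f 0 = 0 \<and> deriv f 0 = 1 \<and>
     (\<forall>z\<in>ball 0 1. z \<noteq> 0 \<longrightarrow>
        f z \<noteq> 0 \<and> deriv f z \<noteq> 0 \<and>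
        - (pi * a1 / 2) < Arg (z * deriv f z / f z) \<and>
        Arg (z * deriv f z / f z) < pi * a2 / 2)"

definition subordinate :: "(complex \<Rightarrow> complex) \<Rightarrow> (complex \<Rightarrow> complex) \<Rightarrow> bool" where
  "subordinate f g \<longleftrightarrow>
     (\<exists>w. w holomorphic_on ball 0 1 \<and> w 0 = 0 \<and> (\<forall>z\<in>ball 0 1. norm (w z) < 1) \<and>
          (\<forall>z\<in>ball 0 1. f z = g (w z)))"

definition thetaG :: "real \<Rightarrow> real \<Rightarrow> real" where
  "thetaG a1 a2 = (a2 - a1) / (a2 + a1)"

definition cG :: "real \<Rightarrow> real \<Rightarrow> complex" where
  "cG a1 a2 = exp (complex_of_real pi * \<i> * complex_of_real (thetaG a1 a2))"

definition G :: "real \<Rightarrow> real \<Rightarrow> complex \<Rightarrow> complex" where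
  "G a1 a2 z = ((1 + cG a1 a2 * z) / (1 - z)) powr complex_of_real ((a1 + a2) / 2)"

text \<open>G~(z) = integral from 0 to z of (G(t) - 1)/t dt (along the segment; the
  integrand has a removable singularity at 0).\<close>
definition Gt :: "real \<Rightarrow> real \<Rightarrow> complex \<Rightarrow> complex" where
  "Gt a1 a2 z = contour_integral (linepath 0 z) (\<lambda>t. (G a1 a2 t - 1) / t)"

end

theory Submission
  imports Defs
begin

lemma Im_exp_shift:
  assumes "s \<noteq> 0"
  shows "Im (s * exp (\<i> * of_real x)) = norm s * sin (Arg s + x)"
proof -
  have "s * exp (\<i> * of_real x) = of_real (norm s) * exp (\<i> * of_real (Arg s + x))"
    by (subst Arg_eq[OF assms]) (simp add: exp_add[symmetric] algebra_simps)
  then show ?thesis by (simp add: Im_exp)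
qed

lemma sin_pos_iff_range:
  assumes "-pi < x" "x \<le> 2*pi - 0" "x < 2*pi"
  shows "0 < sin x \<longleftrightarrow> 0 < x \<and> x < pi"
proof
  assume h: "0 < sin x"
  show "0 < x \<and> x < pi"
  proof (rule ccontr)
    assume "\<not> (0 < x \<and> x < pi)"
    then consider "x \<le> 0" | "pi \<le> x" by linarith
    then have "sin x \<le> 0"
    proof cases
      case 1
      then have "0 \<le> sin (-x)" using assms by (intro sin_ge_zero) auto
      then show ?thesis by simp
    next
      case 2 then show ?thesis using assms by (intro sin_le_zero) auto
    qed
    with h show False by simp
  qed
qed (auto intro: sin_gt_zero)

lemma sector_iff:
  fixes A B :: real
  assumes "0 < A" "A \<le> pi/2" "0 < B" "B \<le> pi/2"
  shows "(0 < Im (s * exp (\<i> * of_real A)) \<and> Im (s * exp (\<i> * of_real (-B))) < 0)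
     \<longleftrightarrow> (s \<noteq> 0 \<and> -A < Arg s \<and> Arg s < B)"
proof (cases "s = 0")
  case True then show ?thesis by simp
next
  case False
  have b: "-pi < Arg s" "Arg s \<le> pi" by (rule mpi_less_Arg, rule Arg_le_pi)
  have n: "norm s > 0" using False by simp
  have e1: "0 < Im (s * exp (\<i> * of_real A)) \<longleftrightarrow> 0 < sin (Arg s + A)"
    using Im_exp_shift[OF False, of A] n by (simp add: zero_less_mult_iff)
  have e2: "Im (s * exp (\<i> * of_real (-B))) < 0 \<longleftrightarrow> 0 < sin (B - Arg s)"
  proof -
    have "Im (s * exp (\<i> * of_real (-B))) = norm s * sin (Arg s + - B)"
      by (rule Im_exp_shift[OF False])
    also have "sin (Arg s + - B) = - sin (B - Arg s)" by (simp add: sin_diff sin_add)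
    finally have X: "Im (s * exp (\<i> * of_real (-B))) = - (norm s * sin (B - Arg s))" by simp
    show ?thesis unfolding X using n by (simp add: zero_less_mult_iff)
  qed
  have s1: "0 < sin (Arg s + A) \<longleftrightarrow> 0 < Arg s + A \<and> Arg s + A < pi"
    using b assms by (intro sin_pos_iff_range) auto
  have s2: "0 < sin (B - Arg s) \<longleftrightarrow> 0 < B - Arg s \<and> B - Arg s < pi"
    using b assms by (intro sin_pos_iff_range) auto
  show ?thesis using e1 e2 s1 s2 b assms False by auto
qed

definition phi :: "real \<Rightarrow> real \<Rightarrow> real" where "phi a1 a2 = pi * thetaG a1 a2 / 2"
definition bet :: "real \<Rightarrow> real \<Rightarrow> real" where "bet a1 a2 = (a1 + a2) / 2"
definition em :: "real \<Rightarrow> real \<Rightarrow> complex" where "em a1 a2 = exp (- (\<i> * of_real (phi a1 a2)))"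
definition SS :: "real \<Rightarrow> real \<Rightarrow> complex set" where
  "SS a1 a2 = {s. 0 < Im (s * exp (\<i> * of_real (pi * a1 / 2))) \<and> Im (s * exp (\<i> * of_real (- (pi * a2 / 2)))) < 0}"
definition MM :: "real \<Rightarrow> real \<Rightarrow> complex \<Rightarrow> complex" where
  "MM a1 a2 z = (1 + cG a1 a2 * z) / (1 - z)"
definition Ginv :: "real \<Rightarrow> real \<Rightarrow> complex \<Rightarrow> complex" where
  "Ginv a1 a2 s = (exp (Ln s / of_real (bet a1 a2)) - 1) / (exp (Ln s / of_real (bet a1 a2)) + cG a1 a2)"

lemma Re_exp_shift:
  assumes "s \<noteq> 0"
  shows "Re (s * exp (\<i> * of_real x)) = norm s * cos (Arg s + x)"
proof -
  have "s * exp (\<i> * of_real x) = of_real (norm s) * exp (\<i> * of_real (Arg s + x))"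
    by (subst Arg_eq[OF assms]) (simp add: exp_add[symmetric] algebra_simps)
  then show ?thesis by (simp add: Re_exp)
qed

lemma cos_pos_iff_range:
  assumes "-3*pi/2 < x" "x < 3*pi/2"
  shows "0 < cos x \<longleftrightarrow> -pi/2 < x \<and> x < pi/2"
proof
  assume h: "0 < cos x"
  show "-pi/2 < x \<and> x < pi/2"
  proof (rule ccontr)
    assume "\<not> (-pi/2 < x \<and> x < pi/2)"
    then consider "x \<le> -pi/2" | "pi/2 \<le> x" by linarith
    then have "cos x \<le> 0"
    proof cases
      case 1
      then have "cos x = cos (-x)" by simp
      moreover have "cos (-x) = sin (-x + pi/2)" by (simp only: sin_add) simp
      moreover have "sin (-x + pi/2) \<le> 0" using 1 assms by (intro sin_le_zero) auto
      ultimately show ?thesis by simp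
    next
      case 2
      have "cos x = sin (x + pi/2)" by (simp add: sin_add)
      moreover have "sin (x + pi/2) \<le> 0" using 2 assms by (intro sin_le_zero) auto
      ultimately show ?thesis by simp
    qed
    with h show False by simp
  qed
qed (auto intro: cos_gt_zero_pi)

context
  fixes a1 a2 :: real
  assumes a1: "0 < a1" "a1 \<le> 1" and a2: "0 < a2" "a2 \<le> 1"
begin

lemma theta_bounds: "-1 < thetaG a1 a2" "thetaG a1 a2 < 1"
  using a1 a2 by (auto simp: thetaG_def field_simps)

lemma phi_bounds: "-(pi/2) < phi a1 a2" "phi a1 a2 < pi/2"
proof -
  have "pi * -1 < pi * thetaG a1 a2" "pi * thetaG a1 a2 < pi * 1"
    using theta_bounds by (intro mult_strict_left_mono; simp)+
  then show "-(pi/2) < phi a1 a2" "phi a1 a2 < pi/2" unfolding phi_def by auto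
qed

lemma cos_phi_pos: "0 < cos (phi a1 a2)"
  using phi_bounds by (intro cos_gt_zero_pi) auto

lemma bet_bounds: "0 < bet a1 a2" "bet a1 a2 \<le> 1"
  using a1 a2 by (auto simp: bet_def)

lemma bet_phi: "bet a1 a2 * (pi/2 - phi a1 a2) = pi * a1 / 2"
    "bet a1 a2 * (pi/2 + phi a1 a2) = pi * a2 / 2"
  using a1 a2 by (auto simp: bet_def phi_def thetaG_def field_simps)

lemma cG_eq: "cG a1 a2 = exp (\<i> * of_real (2 * phi a1 a2))"
  by (simp add: cG_def phi_def algebra_simps)

lemma em_cG: "em a1 a2 * (1 + cG a1 a2 * z) = exp (- (\<i> * of_real (phi a1 a2))) + exp (\<i> * of_real (phi a1 a2)) * z"
  unfolding em_def cG_eq by (simp add: algebra_simps exp_add[symmetric])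

lemma M_half:
  assumes "norm z < 1"
  shows "0 < Re (em a1 a2 * MM a1 a2 z)"
proof -
  define p where "p = phi a1 a2"
  have z1: "z \<noteq> 1" using assms by auto
  have "em a1 a2 * MM a1 a2 z = (exp (- (\<i> * of_real p)) + exp (\<i> * of_real p) * z) / (1 - z)"
    unfolding MM_def p_def using em_cG by (simp add: mult.assoc[symmetric] )
  then have "Re (em a1 a2 * MM a1 a2 z) = cos p * (1 - (Re z ^ 2 + Im z ^ 2)) / ((Re (1 - z))\<^sup>2 + (Im (1 - z))\<^sup>2)"
    by (simp add: Re_divide Re_exp Im_exp algebra_simps power2_eq_square)
  moreover have "(Re (1 - z))\<^sup>2 + (Im (1 - z))\<^sup>2 > 0"
    using z1 by (simp only: cmod_power2[symmetric]) simp
  moreover have "Re z ^ 2 + Im z ^ 2 < 1"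
  proof -
    have "Re z ^ 2 + Im z ^ 2 = norm z ^ 2" by (simp add: cmod_power2)
    also have "\<dots> < 1" using assms by (simp add: power_less_one_iff)
    finally show ?thesis .
  qed
  ultimately show ?thesis using cos_phi_pos p_def by (simp add: divide_pos_pos)
qed

end

context
  fixes a1 a2 :: real
  assumes a1: "0 < a1" "a1 \<le> 1" and a2: "0 < a2" "a2 \<le> 1"
begin

lemma AB_bounds: "pi * a1 / 2 \<le> pi / 2" "pi * a2 / 2 \<le> pi / 2" "0 < pi * a1 / 2" "0 < pi * a2 / 2"
proof -
  have "pi * a1 \<le> pi * 1" "pi * a2 \<le> pi * 1" using a1 a2 by (intro mult_left_mono; simp)+
  then show "pi * a1 / 2 \<le> pi / 2" "pi * a2 / 2 \<le> pi / 2" by auto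
  show "0 < pi * a1 / 2" "0 < pi * a2 / 2" using a1 a2 by auto
qed

lemma half_Arg:
  assumes "0 < Re (em a1 a2 * u)"
  shows "u \<noteq> 0" "phi a1 a2 - pi/2 < Arg u" "Arg u < phi a1 a2 + pi/2"
proof -
  show u0: "u \<noteq> 0" using assms by auto
  have e: "em a1 a2 * u = u * exp (\<i> * of_real (- phi a1 a2))" by (simp add: em_def mult.commute)
  have "Re (em a1 a2 * u) = norm u * cos (Arg u + - phi a1 a2)"
    unfolding e by (rule Re_exp_shift[OF u0])
  then have "0 < cos (Arg u + - phi a1 a2)" using assms u0 by (simp add: zero_less_mult_iff)
  moreover have "-3*pi/2 < Arg u + - phi a1 a2" "Arg u + - phi a1 a2 < 3*pi/2"
    using phi_bounds[OF a1 a2] mpi_less_Arg[of u] Arg_le_pi[of u] by auto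
  ultimately have "-pi/2 < Arg u + - phi a1 a2 \<and> Arg u + - phi a1 a2 < pi/2"
    using cos_pos_iff_range by blast
  then show "phi a1 a2 - pi/2 < Arg u" "Arg u < phi a1 a2 + pi/2" by auto
qed

lemma half_Arg_conv:
  assumes "u \<noteq> 0" "phi a1 a2 - pi/2 < Arg u" "Arg u < phi a1 a2 + pi/2"
  shows "0 < Re (em a1 a2 * u)"
proof -
  have e: "em a1 a2 * u = u * exp (\<i> * of_real (- phi a1 a2))" by (simp add: em_def mult.commute)
  have "Re (em a1 a2 * u) = norm u * cos (Arg u + - phi a1 a2)"
    unfolding e by (rule Re_exp_shift[OF assms(1)])
  moreover have "0 < cos (Arg u + - phi a1 a2)" using assms by (intro cos_gt_zero_pi) auto
  ultimately show ?thesis using assms by simp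
qed

lemma half_not_nonpos:
  assumes "0 < Re (em a1 a2 * u)"
  shows "u \<notin> \<real>\<^sub>\<le>\<^sub>0"
proof
  assume "u \<in> \<real>\<^sub>\<le>\<^sub>0"
  then obtain r where r: "u = of_real r" "r \<le> 0" by (auto simp: nonpos_Reals_def)
  have "Re (em a1 a2 * u) = r * cos (phi a1 a2)" using r by (simp add: em_def Re_exp)
  also have "\<dots> \<le> 0" using r cos_phi_pos[OF a1 a2] by (simp add: mult_nonpos_nonneg)
  finally show False using assms by simp
qed

lemma half_disc:
  assumes "0 < Re (em a1 a2 * u)"
  shows "norm (u - 1) < norm (u + cG a1 a2)"
proof -
  define p where "p = phi a1 a2"
  have e: "Re (em a1 a2 * u) = cos p * Re u + sin p * Im u"
    by (simp add: em_def p_def Re_exp Im_exp)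
  have c2: "cos (2 * p) = 2 * (cos p)^2 - 1" by (simp add: cos_double_cos)
  have s2: "sin (2 * p) = 2 * sin p * cos p" by (simp add: sin_double)
  have "(norm (u + cG a1 a2))^2 - (norm (u - 1))^2 = 2 * Re u * (cos (2*p) + 1) + 2 * Im u * sin (2*p)"
    unfolding cG_eq[OF a1 a2] cmod_power2 p_def[symmetric]
    by (simp add: Re_exp Im_exp power2_eq_square algebra_simps)
  also have "\<dots> = 4 * cos p * (cos p * Re u + sin p * Im u)"
    unfolding c2 s2 by (simp add: algebra_simps power2_eq_square)
  finally have "(norm (u + cG a1 a2))^2 - (norm (u - 1))^2 = 4 * cos p * (cos p * Re u + sin p * Im u)" .
  then have "(norm (u - 1))^2 < (norm (u + cG a1 a2))^2"
    using e assms cos_phi_pos[OF a1 a2] p_def by (smt (verit) mult_pos_pos)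
  then show ?thesis by (simp add: power_less_imp_less_base)
qed

lemma one_plus_cG: "1 + cG a1 a2 \<noteq> 0"
proof -
  have "0 < Re (em a1 a2 * 1)" using half_Arg_conv[of 1] phi_bounds[OF a1 a2] by simp
  then have "norm ((1::complex) - 1) < norm (1 + cG a1 a2)" by (rule half_disc)
  then show ?thesis by auto
qed

lemma MM_half: "norm z < 1 \<Longrightarrow> 0 < Re (em a1 a2 * MM a1 a2 z)"
  using M_half[OF a1 a2] .

lemma G_eq:
  assumes "norm z < 1"
  shows "G a1 a2 z = exp (of_real (bet a1 a2) * Ln (MM a1 a2 z))"
proof -
  have "MM a1 a2 z \<noteq> 0" using half_Arg(1)[OF MM_half[OF assms]] .
  then show ?thesis by (simp add: G_def powr_def MM_def bet_def)
qed

lemma Arg_G: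
  assumes "norm z < 1"
  shows "Arg (G a1 a2 z) = bet a1 a2 * Arg (MM a1 a2 z)"
    "- (pi * a1 / 2) < Arg (G a1 a2 z)" "Arg (G a1 a2 z) < pi * a2 / 2"
proof -
  let ?M = "MM a1 a2 z"
  have h: "0 < Re (em a1 a2 * ?M)" by (rule MM_half[OF assms])
  have M0: "?M \<noteq> 0" and l: "phi a1 a2 - pi/2 < Arg ?M" and u: "Arg ?M < phi a1 a2 + pi/2"
    using half_Arg[OF h] by auto
  have b: "0 < bet a1 a2" "bet a1 a2 \<le> 1" by (rule bet_bounds[OF a1 a2])+
  have "bet a1 a2 * (phi a1 a2 - pi/2) < bet a1 a2 * Arg ?M"
    using l b by (intro mult_strict_left_mono) auto
  moreover have "bet a1 a2 * (phi a1 a2 - pi/2) = - (bet a1 a2 * (pi/2 - phi a1 a2))" by (simp add: algebra_simps)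
  ultimately have L: "- (pi * a1 / 2) < bet a1 a2 * Arg ?M" using bet_phi(1)[OF a1 a2] by linarith
  have "bet a1 a2 * Arg ?M < bet a1 a2 * (phi a1 a2 + pi/2)"
    using u b by (intro mult_strict_left_mono) auto
  moreover have "bet a1 a2 * (phi a1 a2 + pi/2) = bet a1 a2 * (pi/2 + phi a1 a2)" by (simp add: add.commute)
  ultimately have U: "bet a1 a2 * Arg ?M < pi * a2 / 2" using bet_phi(2)[OF a1 a2] by linarith
  have Im: "Im (of_real (bet a1 a2) * Ln ?M) = bet a1 a2 * Arg ?M"
    using M0 by (simp add: Arg_eq_Im_Ln)
  have "-pi < bet a1 a2 * Arg ?M" using L AB_bounds(1) pi_gt_zero by linarith
  moreover have "bet a1 a2 * Arg ?M \<le> pi" using U AB_bounds(2) pi_gt_zero by linarith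
  ultimately have "-pi < bet a1 a2 * Arg ?M" "bet a1 a2 * Arg ?M \<le> pi" by auto
  then show A: "Arg (G a1 a2 z) = bet a1 a2 * Arg ?M"
    unfolding G_eq[OF assms] using Im by (subst Arg_exp) auto
  show "- (pi * a1 / 2) < Arg (G a1 a2 z)" "Arg (G a1 a2 z) < pi * a2 / 2" using A L U by auto
qed

lemma SS_iff: "s \<in> SS a1 a2 \<longleftrightarrow> s \<noteq> 0 \<and> - (pi * a1 / 2) < Arg s \<and> Arg s < pi * a2 / 2"
  unfolding SS_def using sector_iff[of "pi * a1 / 2" "pi * a2 / 2" s] a1 a2 by auto

lemma G_in_SS: "norm z < 1 \<Longrightarrow> G a1 a2 z \<in> SS a1 a2"
  unfolding SS_iff using Arg_G[of z] by (auto simp: G_eq)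

lemma SS_not_nonpos: "s \<in> SS a1 a2 \<Longrightarrow> s \<notin> \<real>\<^sub>\<le>\<^sub>0"
proof
  assume s: "s \<in> SS a1 a2" and n: "s \<in> \<real>\<^sub>\<le>\<^sub>0"
  have "s \<noteq> 0" "Arg s < pi * a2 / 2" using s SS_iff by auto
  moreover have "pi * a2 / 2 < pi" using a2 by auto
  moreover from n obtain r where "s = of_real r" "r \<le> 0" by (auto simp: nonpos_Reals_def)
  ultimately show False by (auto split: if_splits)
qed

lemma open_SS: "open (SS a1 a2)"
  unfolding SS_def by (intro open_Collect_conj open_Collect_less continuous_intros)

lemma one_in_SS: "1 \<in> SS a1 a2"
  unfolding SS_iff using a1 a2 by auto

lemma SS_segment:
  assumes "s \<in> SS a1 a2" "0 \<le> t" "t \<le> 1"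
  shows "1 + of_real t * (s - 1) \<in> SS a1 a2"
proof -
  have 1: "0 < Im (1 * exp (\<i> * of_real (pi * a1 / 2)))" "Im (1 * exp (\<i> * of_real (- (pi * a2 / 2)))) < 0"
    using one_in_SS unfolding SS_def mem_Collect_eq by blast+
  have s: "0 < Im (s * exp (\<i> * of_real (pi * a1 / 2)))" "Im (s * exp (\<i> * of_real (- (pi * a2 / 2)))) < 0"
    using assms(1) unfolding SS_def mem_Collect_eq by blast+
  have e: "Im ((1 + of_real t * (s - 1)) * w) = (1 - t) * Im (1 * w) + t * Im (s * w)" for w
    by (simp add: algebra_simps)
  have pos: "0 < (1 - t) * x + t * y" if "0 < x" "0 < y" for x y
  proof -
    have "0 \<le> t * y" "0 \<le> (1 - t) * x" using assms that by simp_all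
    moreover have "0 < t * y \<or> 0 < (1 - t) * x" using assms that by (cases "t = 1") auto
    ultimately show ?thesis by linarith
  qed
  have neg: "(1 - t) * x + t * y < 0" if "x < 0" "y < 0" for x y
    using pos[of "-x" "-y"] that by (simp add: algebra_simps)
  show ?thesis unfolding SS_def mem_Collect_eq e
    using pos[OF 1(1) s(1)] neg[OF 1(2) s(2)] by blast
qed

end

lemma div_div_cancel: "(B::complex) \<noteq> 0 \<Longrightarrow> (A / B) / (C / B) = A / C"
  by (metis divide_divide_eq_left divide_divide_eq_right nonzero_mult_div_cancel_right times_divide_eq_right)

lemma mult_div_cancel_c: "(C::complex) \<noteq> 0 \<Longrightarrow> (A * C) / C = A"
  by simp

context
  fixes a1 a2 :: real
  assumes a1: "0 < a1" "a1 \<le> 1" and a2: "0 < a2" "a2 \<le> 1"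
begin

lemma Ginv_facts:
  assumes s: "s \<in> SS a1 a2"
  defines "u \<equiv> exp (Ln s / of_real (bet a1 a2))"
  shows "0 < Re (em a1 a2 * u)" "u + cG a1 a2 \<noteq> 0" "norm (Ginv a1 a2 s) < 1"
    "MM a1 a2 (Ginv a1 a2 s) = u" "G a1 a2 (Ginv a1 a2 s) = s"
proof -
  have s0: "s \<noteq> 0" and l: "- (pi * a1 / 2) < Arg s" and r: "Arg s < pi * a2 / 2"
    using s SS_iff[OF a1 a2] by auto
  have b: "0 < bet a1 a2" "bet a1 a2 \<le> 1" by (rule bet_bounds[OF a1 a2])+
  have Imz: "Im (Ln s / of_real (bet a1 a2)) = Arg s / bet a1 a2"
    using s0 by (simp add: Arg_eq_Im_Ln)
  have "bet a1 a2 * (phi a1 a2 - pi/2) = - (pi * a1 / 2)"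
    using bet_phi(1)[OF a1 a2] by (simp add: algebra_simps)
  then have "bet a1 a2 * (phi a1 a2 - pi/2) < Arg s" using l by linarith
  then have L: "phi a1 a2 - pi/2 < Arg s / bet a1 a2" using b by (simp add: pos_less_divide_eq mult.commute)
  have "bet a1 a2 * (phi a1 a2 + pi/2) = pi * a2 / 2"
    using bet_phi(2)[OF a1 a2] by (simp add: algebra_simps)
  then have "Arg s < bet a1 a2 * (phi a1 a2 + pi/2)" using r by linarith
  then have R: "Arg s / bet a1 a2 < phi a1 a2 + pi/2" using b by (simp add: pos_divide_less_eq mult.commute)
  have pb: "-(pi/2) < phi a1 a2" "phi a1 a2 < pi/2" by (rule phi_bounds[OF a1 a2])+
  have ImB: "-pi < Im (Ln s / of_real (bet a1 a2))" "Im (Ln s / of_real (bet a1 a2)) \<le> pi"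
    using L R pb Imz by auto
  have Argu: "Arg u = Arg s / bet a1 a2"
    unfolding u_def using ImB Imz by (simp add: Arg_exp)
  have u0: "u \<noteq> 0" unfolding u_def by simp
  show h: "0 < Re (em a1 a2 * u)"
    using half_Arg_conv[OF a1 a2 u0] Argu L R by simp
  have d: "norm (u - 1) < norm (u + cG a1 a2)" by (rule half_disc[OF a1 a2 h])
  then show uc: "u + cG a1 a2 \<noteq> 0" by auto
  show n: "norm (Ginv a1 a2 s) < 1"
    using d uc unfolding Ginv_def u_def[symmetric] by (simp add: norm_divide divide_less_eq)
  have c1: "1 + cG a1 a2 \<noteq> 0" by (rule one_plus_cG[OF a1 a2])
  have g: "Ginv a1 a2 s = (u - 1) / (u + cG a1 a2)" unfolding Ginv_def u_def ..
  show M: "MM a1 a2 (Ginv a1 a2 s) = u"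
  proof -
    have e1: "1 - (u - 1) / (u + cG a1 a2) = (1 + cG a1 a2) / (u + cG a1 a2)"
      using uc by (simp add: field_simps)
    have e2: "1 + cG a1 a2 * ((u - 1) / (u + cG a1 a2)) = u * (1 + cG a1 a2) / (u + cG a1 a2)"
      using uc by (simp add: field_simps)
    have "MM a1 a2 (Ginv a1 a2 s) = (u * (1 + cG a1 a2) / (u + cG a1 a2)) / ((1 + cG a1 a2) / (u + cG a1 a2))"
      unfolding MM_def g e1 e2 ..
    also have "\<dots> = u" by (subst div_div_cancel[OF uc]) (simp add: c1)
    finally show ?thesis .
  qed
  have "Ln u = Ln s / of_real (bet a1 a2)" unfolding u_def using ImB by (rule Ln_exp)
  then show "G a1 a2 (Ginv a1 a2 s) = s"
    using G_eq[OF a1 a2 n] M b s0 by simp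
qed

lemma Ginv_G:
  assumes z: "norm z < 1"
  shows "Ginv a1 a2 (G a1 a2 z) = z"
proof -
  let ?M = "MM a1 a2 z"
  have h: "0 < Re (em a1 a2 * ?M)" by (rule MM_half[OF a1 a2 z])
  have M0: "?M \<noteq> 0" using half_Arg(1)[OF a1 a2 h] .
  have b: "0 < bet a1 a2" using bet_bounds[OF a1 a2] by simp
  have A: "Arg (G a1 a2 z) = bet a1 a2 * Arg ?M" "- (pi * a1 / 2) < Arg (G a1 a2 z)" "Arg (G a1 a2 z) < pi * a2 / 2"
    using Arg_G[OF a1 a2 z] by auto
  have Im: "Im (of_real (bet a1 a2) * Ln ?M) = bet a1 a2 * Arg ?M" using M0 by (simp add: Arg_eq_Im_Ln)
  have "Ln (G a1 a2 z) = of_real (bet a1 a2) * Ln ?M"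
    unfolding G_eq[OF a1 a2 z] using A Im AB_bounds[OF a1 a2] pi_gt_zero
    by (intro Ln_exp) linarith+
  then have E: "exp (Ln (G a1 a2 z) / of_real (bet a1 a2)) = ?M" using b M0 by simp
  have z1: "1 - z \<noteq> 0" using z by auto
  have c1: "1 + cG a1 a2 \<noteq> 0" by (rule one_plus_cG[OF a1 a2])
  have e1: "?M - 1 = z * (1 + cG a1 a2) / (1 - z)" unfolding MM_def using z1 by (simp add: field_simps)
  have e2: "?M + cG a1 a2 = (1 + cG a1 a2) / (1 - z)" unfolding MM_def using z1 by (simp add: field_simps)
  have "Ginv a1 a2 (G a1 a2 z) = (z * (1 + cG a1 a2) / (1 - z)) / ((1 + cG a1 a2) / (1 - z))"
    unfolding Ginv_def E e1 e2 ..
  also have "\<dots> = z" by (subst div_div_cancel[OF z1]) (simp add: c1)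
  finally show ?thesis .
qed

lemma G_0: "G a1 a2 0 = 1"
  using G_eq[OF a1 a2, of 0] by (simp add: MM_def)

lemma Ginv_1: "Ginv a1 a2 1 = 0"
  by (simp add: Ginv_def)

lemma MM_holo: "MM a1 a2 holomorphic_on ball 0 1"
  unfolding MM_def by (intro holomorphic_intros) auto

lemma G_holo: "G a1 a2 holomorphic_on ball 0 1"
proof -
  have "(\<lambda>z. exp (of_real (bet a1 a2) * Ln (MM a1 a2 z))) holomorphic_on ball 0 1"
    using MM_holo half_not_nonpos[OF a1 a2 MM_half[OF a1 a2]]
    by (intro holomorphic_intros) auto
  then show ?thesis by (rule holomorphic_transform) (simp add: G_eq[OF a1 a2])
qed

lemma Ginv_holo: "Ginv a1 a2 holomorphic_on SS a1 a2"
  unfolding Ginv_def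
  using Ginv_facts(2) SS_not_nonpos[OF a1 a2]
  by (intro holomorphic_intros) auto

lemma G_deriv0: "deriv (G a1 a2) 0 = of_real (bet a1 a2) * (1 + cG a1 a2)"
proof -
  let ?F = "\<lambda>z. exp (of_real (bet a1 a2) * Ln (MM a1 a2 z))"
  have M1: "MM a1 a2 0 = 1" by (simp add: MM_def)
  have "(MM a1 a2 has_field_derivative (cG a1 a2 * (1 - 0) + (1 + cG a1 a2 * 0)) / (1 - 0)^2) (at 0)"
    unfolding MM_def by (auto intro!: derivative_eq_intros simp: power2_eq_square)
  then have DM: "(MM a1 a2 has_field_derivative (1 + cG a1 a2)) (at 0)" by (simp add: add.commute)
  have DL: "(Ln has_field_derivative inverse (MM a1 a2 0)) (at (MM a1 a2 0))"
    using M1 by (intro has_field_derivative_Ln) auto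
  have DLM: "((\<lambda>z. Ln (MM a1 a2 z)) has_field_derivative inverse (MM a1 a2 0) * (1 + cG a1 a2)) (at 0)"
    using DERIV_chain2[OF DL DM] .
  have DH: "((\<lambda>z. of_real (bet a1 a2) * Ln (MM a1 a2 z)) has_field_derivative of_real (bet a1 a2) * (inverse (MM a1 a2 0) * (1 + cG a1 a2))) (at 0)"
    by (rule DERIV_cmult[OF DLM])
  have "(?F has_field_derivative exp (of_real (bet a1 a2) * Ln (MM a1 a2 0)) * (of_real (bet a1 a2) * (inverse (MM a1 a2 0) * (1 + cG a1 a2)))) (at 0)"
    using DERIV_chain2[OF DERIV_exp DH] .
  then have "(?F has_field_derivative of_real (bet a1 a2) * (1 + cG a1 a2)) (at 0)" using M1 by simp
  then have "(G a1 a2 has_field_derivative of_real (bet a1 a2) * (1 + cG a1 a2)) (at 0)"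
    by (rule has_field_derivative_transform_within_open[where S="ball 0 1"]) (auto simp: G_eq[OF a1 a2])
  then show ?thesis by (rule DERIV_imp_deriv)
qed

end

lemma integral_Re_pos:
  fixes f :: "real \<Rightarrow> complex"
  assumes c: "continuous_on {0..1} f" and p: "\<And>s. s \<in> {0..1} \<Longrightarrow> 0 < Re (f s)"
    and I: "(f has_integral I) {0..1}"
  shows "0 < Re I"
proof -
  have cr: "continuous_on {0..1} (\<lambda>s. Re (f s))" using c by (intro continuous_intros)
  obtain s0 where s0: "s0 \<in> {0..1}" "\<And>s. s \<in> {0..1} \<Longrightarrow> Re (f s0) \<le> Re (f s)"
    using continuous_attains_inf[OF compact_Icc _ cr] by fastforce
  have IR: "((\<lambda>s. Re (f s)) has_integral Re I) {0..1}"
    using has_integral_linear[OF I bounded_linear_Re] by (simp add: o_def)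
  have "((\<lambda>s::real. Re (f s0)) has_integral Re (f s0)) {0..1}"
    using has_integral_const_real[of "Re (f s0)" "0::real" 1] by auto
  then have "Re (f s0) \<le> Re I" using IR s0(2) by (rule has_integral_le)
  with p[OF s0(1)] show ?thesis by simp
qed

lemma mediant_between:
  fixes a1 b1 a2 b2 s :: real
  assumes "0 < b1" "0 < b2" "0 \<le> s" "s \<le> 1"
  shows "min (a1/b1) (a2/b2) \<le> ((1-s)*a1 + s*a2) / ((1-s)*b1 + s*b2)
       \<and> ((1-s)*a1 + s*a2) / ((1-s)*b1 + s*b2) \<le> max (a1/b1) (a2/b2)"
proof -
  have d: "0 < (1-s)*b1 + s*b2"
    using assms by (cases "s = 0") (auto intro: add_nonneg_pos add_pos_nonneg)
  define m where "m = min (a1/b1) (a2/b2)"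
  define M where "M = max (a1/b1) (a2/b2)"
  have h: "m * b1 \<le> a1" "m * b2 \<le> a2" "a1 \<le> M * b1" "a2 \<le> M * b2"
    using assms by (auto simp: m_def M_def min_def max_def field_simps)
  have "(1-s)*(m*b1) \<le> (1-s)*a1" "s*(m*b2) \<le> s*a2" "(1-s)*a1 \<le> (1-s)*(M*b1)" "s*a2 \<le> s*(M*b2)"
    using h assms by (intro mult_left_mono; simp)+
  moreover have "m * ((1-s)*b1 + s*b2) = (1-s)*(m*b1) + s*(m*b2)" "M * ((1-s)*b1 + s*b2) = (1-s)*(M*b1) + s*(M*b2)"
    by (simp_all add: algebra_simps)
  ultimately have "m * ((1-s)*b1 + s*b2) \<le> (1-s)*a1 + s*a2" "(1-s)*a1 + s*a2 \<le> M * ((1-s)*b1 + s*b2)"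
    by linarith+
  then show ?thesis using d by (simp add: m_def[symmetric] M_def[symmetric] pos_le_divide_eq pos_divide_le_eq)
qed

lemma final_ineq:
  fixes a U X b :: real
  assumes "-(pi/2) < a" "a < pi/2" "-(pi/2) < a - U" "a - U < pi/2"
    and "min 0 U \<le> X" "X \<le> max 0 U" "0 < b" "b \<le> 1"
  shows "-(pi/2) < a + (b - 1) * X \<and> a + (b - 1) * X < pi/2"
proof (cases "0 \<le> U")
  case True
  then have X: "0 \<le> X" "X \<le> U" using assms by auto
  have 1: "(b - 1) * X \<le> 0" using X assms by (simp add: mult_nonpos_nonneg)
  have 2: "(b - 1) * U \<le> (b - 1) * X" using X assms by (intro mult_left_mono_neg) auto
  have 3: "b * (-(pi/2)) < b * a" using assms by (intro mult_strict_left_mono) auto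
  have 4: "(1 - b) * (-(pi/2)) \<le> (1 - b) * (a - U)" using assms by (intro mult_left_mono) auto
  have "a + (b - 1) * U = b * a + (1 - b) * (a - U)" by (simp add: algebra_simps)
  moreover have "b * (-(pi/2)) + (1 - b) * (-(pi/2)) = -(pi/2)" by (simp add: algebra_simps)
  ultimately show ?thesis using 1 2 3 4 assms by linarith
next
  case False
  then have X: "X \<le> 0" "U \<le> X" using assms by auto
  have 1: "0 \<le> (b - 1) * X" using X assms by (simp add: mult_nonpos_nonpos)
  have 2: "(b - 1) * X \<le> (b - 1) * U" using X assms by (intro mult_left_mono_neg) auto
  have 3: "b * a < b * (pi/2)" using assms by (intro mult_strict_left_mono) auto
  have 4: "(1 - b) * (a - U) \<le> (1 - b) * (pi/2)" using assms by (intro mult_left_mono) auto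
  have "a + (b - 1) * U = b * a + (1 - b) * (a - U)" by (simp add: algebra_simps)
  moreover have "b * (pi/2) + (1 - b) * (pi/2) = pi/2" by (simp add: field_simps)
  ultimately show ?thesis using 1 2 3 4 assms by linarith
qed

context
  fixes a1 a2 :: real
  assumes a1: "0 < a1" "a1 \<le> 1" and a2: "0 < a2" "a2 \<le> 1"
begin

lemma em_conv: "em a1 a2 = of_real (cos (phi a1 a2)) - \<i> * of_real (sin (phi a1 a2))"
  by (simp add: em_def complex_eq_iff Re_exp Im_exp)

lemma Arg_half_decomp:
  assumes "0 < Re (em a1 a2 * x)"
  shows "Arg x = phi a1 a2 + Arg (em a1 a2 * x)" "\<bar>Arg (em a1 a2 * x)\<bar> < pi/2"
proof -
  have x0: "x \<noteq> 0" using assms by auto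
  have ex0: "em a1 a2 * x \<noteq> 0" using assms by auto
  show b: "\<bar>Arg (em a1 a2 * x)\<bar> < pi/2"
    using Re_Ln_pos_lt_imp[OF assms] by (simp add: Arg_eq_Im_Ln[OF ex0])
  have ex: "x = exp (\<i> * of_real (phi a1 a2)) * (em a1 a2 * x)"
    by (simp add: em_def mult.assoc[symmetric] exp_add[symmetric])
  have A: "Arg (exp (\<i> * of_real (phi a1 a2))) = phi a1 a2"
    using phi_bounds[OF a1 a2] by (subst Arg_exp) auto
  have "Arg (exp (\<i> * of_real (phi a1 a2)) * (em a1 a2 * x)) = phi a1 a2 + Arg (em a1 a2 * x)"
    using A b phi_bounds[OF a1 a2] x0 by (subst Arg_times) (auto simp: em_def)
  then show "Arg x = phi a1 a2 + Arg (em a1 a2 * x)" using ex by metis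
qed

end

context
  fixes a1 a2 :: real
  assumes a1: "0 < a1" "a1 \<le> 1" and a2: "0 < a2" "a2 \<le> 1"
begin

lemma Re_em_pos: "0 < Re (em a1 a2)"
  using cos_phi_pos[OF a1 a2] by (simp add: em_def Re_exp)

lemma em_cG_exp: "em a1 a2 * cG a1 a2 = exp (\<i> * of_real (phi a1 a2))"
  unfolding em_def cG_eq[OF a1 a2] by (simp add: exp_add[symmetric] algebra_simps)

lemma Arg_em: "Arg (em a1 a2) = - phi a1 a2"
  unfolding em_def using phi_bounds[OF a1 a2] by (subst Arg_exp) auto

lemma seg_half:
  assumes h: "0 < Re (em a1 a2 * u)" and s: "0 \<le> s" "s \<le> 1"
  shows "0 < Re (em a1 a2 * (1 + of_real s * (u - 1)))"
proof -
  have "Re (em a1 a2 * (1 + of_real s * (u - 1))) = (1 - s) * Re (em a1 a2) + s * Re (em a1 a2 * u)"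
    by (simp add: algebra_simps)
  moreover have "0 \<le> (1 - s) * Re (em a1 a2)" "0 \<le> s * Re (em a1 a2 * u)"
    using s h Re_em_pos by simp_all
  moreover have "0 < (1 - s) * Re (em a1 a2) \<or> 0 < s * Re (em a1 a2 * u)"
    using s h Re_em_pos by (cases "s = 1") auto
  ultimately show ?thesis by linarith
qed

lemma arctan_between:
  assumes "min p q \<le> r" "r \<le> max p q"
  shows "min (arctan p) (arctan q) \<le> arctan r \<and> arctan r \<le> max (arctan p) (arctan q)"
  using assms by (cases "p \<le> q") (auto simp: min_def max_def arctan_le_iff)

lemma Arg_seg_between:
  assumes h: "0 < Re (em a1 a2 * u)" and s: "0 \<le> s" "s \<le> 1"
  shows "min 0 (Arg u) \<le> Arg (1 + of_real s * (u - 1)) \<and> Arg (1 + of_real s * (u - 1)) \<le> max 0 (Arg u)"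
proof -
  let ?v = "1 + of_real s * (u - 1)"
  let ?e = "em a1 a2"
  have hv: "0 < Re (?e * ?v)" by (rule seg_half[OF h s])
  have h1: "0 < Re (?e * 1)" using Re_em_pos by simp
  have Dv: "Arg ?v = phi a1 a2 + Arg (?e * ?v)" by (rule Arg_half_decomp(1)[OF a1 a2 hv])
  have Du: "Arg u = phi a1 a2 + Arg (?e * u)" by (rule Arg_half_decomp(1)[OF a1 a2 h])
  have ev: "?e * ?v = of_real (1 - s) * ?e + of_real s * (?e * u)" by (simp add: algebra_simps)
  have Re_ev: "Re (?e * ?v) = (1 - s) * Re ?e + s * Re (?e * u)" and Im_ev: "Im (?e * ?v) = (1 - s) * Im ?e + s * Im (?e * u)"
    unfolding ev by simp_all
  have av: "Arg (?e * ?v) = arctan (Im (?e * ?v) / Re (?e * ?v))" by (rule arg_conv_arctan[OF hv])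
  have au: "Arg (?e * u) = arctan (Im (?e * u) / Re (?e * u))" by (rule arg_conv_arctan[OF h])
  have ae: "Arg ?e = arctan (Im ?e / Re ?e)" by (rule arg_conv_arctan[OF Re_em_pos])
  have "min (Im ?e / Re ?e) (Im (?e * u) / Re (?e * u)) \<le> Im (?e * ?v) / Re (?e * ?v)
      \<and> Im (?e * ?v) / Re (?e * ?v) \<le> max (Im ?e / Re ?e) (Im (?e * u) / Re (?e * u))"
    unfolding Re_ev Im_ev using mediant_between[OF Re_em_pos h s] by simp
  then have "min (Arg ?e) (Arg (?e * u)) \<le> Arg (?e * ?v) \<and> Arg (?e * ?v) \<le> max (Arg ?e) (Arg (?e * u))"
    unfolding av au ae using arctan_between by blast
  then show ?thesis unfolding Dv Du Arg_em by (auto simp: min_def max_def split: if_splits)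
qed

lemma Arg_Y_bounds:
  assumes h: "0 < Re (em a1 a2 * u)"
  shows "0 < Re (em a1 a2 * (u + cG a1 a2))"
    "\<bar>Arg (em a1 a2 * (u + cG a1 a2))\<bar> < pi/2"
    "\<bar>Arg (em a1 a2 * (u + cG a1 a2)) - Arg u\<bar> < pi/2"
proof -
  let ?e = "em a1 a2"
  let ?Y = "?e * (u + cG a1 a2)"
  have u0: "u \<noteq> 0" using h by auto
  have Y: "?Y = ?e * u + exp (\<i> * of_real (phi a1 a2))" using em_cG_exp by (simp add: algebra_simps)
  show ReY: "0 < Re ?Y" unfolding Y using h cos_phi_pos[OF a1 a2] by (simp add: Re_exp)
  have Y0: "?Y \<noteq> 0"
  proof
    assume "?Y = 0"
    then have "Re ?Y = 0" by (simp only: zero_complex.sel)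
    with ReY show False by simp
  qed
  show aY: "\<bar>Arg ?Y\<bar> < pi/2"
    using Re_Ln_pos_lt_imp[OF ReY] by (simp add: Arg_eq_Im_Ln[OF Y0])
  define Z where "Z = ?Y / u"
  have Z: "Z = ?e + exp (\<i> * of_real (phi a1 a2)) / u" unfolding Z_def Y using u0 by (simp add: field_simps)
  have "Re (exp (\<i> * of_real (phi a1 a2)) / u) = Re (?e * u) / (norm u)^2"
    by (simp add: Re_divide' em_conv[OF a1 a2] Re_exp Im_exp algebra_simps)
  moreover have "0 < (norm u)^2" using u0 by simp
  ultimately have "0 < Re (exp (\<i> * of_real (phi a1 a2)) / u)" using h by simp
  then have ReZ: "0 < Re Z" unfolding Z using Re_em_pos by simp
  have Z0: "Z \<noteq> 0" using ReZ by auto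
  have aZ: "\<bar>Arg Z\<bar> < pi/2"
    using Re_Ln_pos_lt_imp[OF ReZ] by (simp add: Arg_eq_Im_Ln[OF Z0])
  have YZ: "?Y = Z * u" unfolding Z_def using u0 by simp
  define x where "x = Arg Z + Arg u"
  have A: "Arg ?Y = x + (if x \<in> {-pi<..pi} then 0 else if x > pi then -2*pi else 2*pi)"
    unfolding YZ x_def by (rule Arg_times'[OF Z0 u0])
  have bu: "-pi < Arg u" "Arg u \<le> pi" by (rule mpi_less_Arg, rule Arg_le_pi)
  have "Arg ?Y = x"
  proof (cases "x \<in> {-pi<..pi}")
    case True then show ?thesis using A by simp
  next
    case False
    then show ?thesis using A aY aZ bu x_def by (auto split: if_splits)
  qed
  then show "\<bar>Arg ?Y - Arg u\<bar> < pi/2" using aZ x_def by simp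
qed

end

context
  fixes a1 a2 :: real
  assumes a1: "0 < a1" "a1 \<le> 1" and a2: "0 < a2" "a2 \<le> 1"
begin

lemma MS_u:
  assumes h: "0 < Re (em a1 a2 * u)" and u1: "u \<noteq> 1"
  shows "0 < Re (em a1 a2 * ((exp (of_real (bet a1 a2) * Ln u) - 1) * (u + cG a1 a2) / (u - 1)))"
proof -
  define b where "b = (of_real (bet a1 a2) :: complex)"
  define v where "v = (\<lambda>s::real. 1 + of_real s * (u - 1))"
  define Y where "Y = em a1 a2 * (u + cG a1 a2)"
  have bb: "0 < bet a1 a2" "bet a1 a2 \<le> 1" by (rule bet_bounds[OF a1 a2])+
  have vh: "0 < Re (em a1 a2 * v s)" if "s \<in> {0..1}" for s
    unfolding v_def using seg_half[OF a1 a2 h] that by auto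
  have vnp: "v s \<notin> \<real>\<^sub>\<le>\<^sub>0" if "s \<in> {0..1}" for s
    using half_not_nonpos[OF a1 a2 vh[OF that]] .
  have v0: "v s \<noteq> 0" if "s \<in> {0..1}" for s
    using vh[OF that] by auto
  have D: "((\<lambda>s. exp (b * Ln (v s))) has_vector_derivative (b * (u - 1) * exp ((b - 1) * Ln (v s)))) (at s within {0..1})"
    if s: "s \<in> {0..1}" for s
  proof -
    have DL: "(Ln has_field_derivative inverse (1 + of_real s * (u - 1))) (at (1 + of_real s * (u - 1)))"
      using has_field_derivative_Ln vnp[OF s] unfolding v_def by blast
    have Dlin: "((\<lambda>\<zeta>. 1 + \<zeta> * (u - 1)) has_field_derivative (u - 1)) (at (of_real s))"
      by (auto intro!: derivative_eq_intros)
    have D1: "((\<lambda>\<zeta>. Ln (1 + \<zeta> * (u - 1))) has_field_derivative inverse (v s) * (u - 1)) (at (of_real s))"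
      using DERIV_chain2[OF DL Dlin] unfolding v_def .
    have D2: "((\<lambda>\<zeta>. b * Ln (1 + \<zeta> * (u - 1))) has_field_derivative b * (inverse (v s) * (u - 1))) (at (of_real s))"
      by (rule DERIV_cmult[OF D1])
    have D3: "((\<lambda>\<zeta>. exp (b * Ln (1 + \<zeta> * (u - 1)))) has_field_derivative exp (b * Ln (v s)) * (b * (inverse (v s) * (u - 1)))) (at (of_real s))"
      using DERIV_chain2[OF DERIV_exp D2] unfolding v_def .
    have eq: "exp (b * Ln (v s)) * (b * (inverse (v s) * (u - 1))) = b * (u - 1) * exp ((b - 1) * Ln (v s))"
    proof -
      have i: "inverse (v s) = exp (- Ln (v s))" using v0[OF s] by (simp add: exp_minus)
      have e2: "exp ((b - 1) * Ln (v s)) = exp (b * Ln (v s)) * exp (- Ln (v s))"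
        by (simp add: exp_add[symmetric] algebra_simps)
      show ?thesis unfolding i e2 by (simp only: mult_ac)
    qed
    have D4: "((\<lambda>s. exp (b * Ln (v s))) has_vector_derivative exp (b * Ln (v s)) * (b * (inverse (v s) * (u - 1)))) (at s within {0..1})"
      using has_vector_derivative_real_field[OF D3] unfolding v_def .
    show ?thesis using D4 unfolding eq .
  qed
  have FTC: "((\<lambda>s. b * (u - 1) * exp ((b - 1) * Ln (v s))) has_integral (exp (b * Ln (v 1)) - exp (b * Ln (v 0)))) {0..1}"
    by (rule fundamental_theorem_of_calculus) (auto intro: D)
  have v10: "v 1 = u" "v 0 = 1" unfolding v_def by simp_all
  define K where "K = em a1 a2 * (u + cG a1 a2) / (u - 1)"
  have I1: "((\<lambda>s. K * (b * (u - 1) * exp ((b - 1) * Ln (v s)))) has_integral K * (exp (b * Ln u) - 1)) {0..1}"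
    using has_integral_mult_right[OF FTC, of K] unfolding v10 by simp
  have u10: "u - 1 \<noteq> 0" using u1 by simp
  have eqK: "K * (b * (u - 1) * exp ((b - 1) * Ln (v s))) = b * Y * exp ((b - 1) * Ln (v s))" for s
    unfolding K_def Y_def using u10 by (simp add: field_simps)
  have I2: "((\<lambda>s. b * Y * exp ((b - 1) * Ln (v s))) has_integral K * (exp (b * Ln u) - 1)) {0..1}"
    using I1 unfolding eqK .
  have goal_eq: "em a1 a2 * ((exp (b * Ln u) - 1) * (u + cG a1 a2) / (u - 1)) = K * (exp (b * Ln u) - 1)"
    unfolding K_def by (simp add: field_simps)
  have YB: "0 < Re Y" "\<bar>Arg Y\<bar> < pi/2" "\<bar>Arg Y - Arg u\<bar> < pi/2"
    unfolding Y_def using Arg_Y_bounds[OF a1 a2 h] by auto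
  have Y0: "Y \<noteq> 0" using YB(1) by auto
  have pos: "0 < Re (b * Y * exp ((b - 1) * Ln (v s)))" if s: "s \<in> {0..1}" for s
  proof -
    have Xb: "min 0 (Arg u) \<le> Arg (v s) \<and> Arg (v s) \<le> max 0 (Arg u)"
      unfolding v_def using Arg_seg_between[OF a1 a2 h] s by auto
    have fi: "-(pi/2) < Arg Y + (bet a1 a2 - 1) * Arg (v s) \<and> Arg Y + (bet a1 a2 - 1) * Arg (v s) < pi/2"
    proof (rule final_ineq)
      show "-(pi/2) < Arg Y" "Arg Y < pi/2" using YB(2) by (simp_all add: abs_less_iff)
      show "-(pi/2) < Arg Y - Arg u" "Arg Y - Arg u < pi/2" using YB(3) abs_less_iff[of "Arg Y - Arg u" "pi/2"] by linarith+
    qed (use Xb bb in auto)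
    define W where "W = Ln Y + (b - 1) * Ln (v s)"
    have e: "b * Y * exp ((b - 1) * Ln (v s)) = b * exp W"
      unfolding W_def using Y0 by (simp add: exp_add)
    have "Im W = Arg Y + (bet a1 a2 - 1) * Arg (v s)"
      unfolding W_def using Y0 v0[OF s] unfolding b_def by (simp add: Arg_eq_Im_Ln)
    then have c: "0 < cos (Im W)" using fi by (intro cos_gt_zero_pi) auto
    have "Re (b * exp W) = bet a1 a2 * (exp (Re W) * cos (Im W))" unfolding b_def by (simp add: Re_exp)
    then show ?thesis unfolding e using bb c by simp
  qed
  have cont: "continuous_on {0..1} (\<lambda>s. b * Y * exp ((b - 1) * Ln (v s)))"
    unfolding v_def using vnp unfolding v_def by (intro continuous_intros) auto
  have "0 < Re (K * (exp (b * Ln u) - 1))" by (rule integral_Re_pos[OF cont pos I2])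
  then show ?thesis unfolding b_def[symmetric] goal_eq .
qed

end

definition g1 :: "real \<Rightarrow> real \<Rightarrow> complex \<Rightarrow> complex" where
  "g1 a1 a2 z = (if z = 0 then deriv (G a1 a2) 0 else (G a1 a2 z - G a1 a2 0) / (z - 0))"

context
  fixes a1 a2 :: real
  assumes a1: "0 < a1" "a1 \<le> 1" and a2: "0 < a2" "a2 \<le> 1"
begin

lemma g1_holo: "g1 a1 a2 holomorphic_on ball 0 1"
  unfolding g1_def[abs_def] by (rule pole_lemma[OF G_holo[OF a1 a2]]) auto

lemma g1_eq: "z \<noteq> 0 \<Longrightarrow> g1 a1 a2 z = (G a1 a2 z - 1) / z"
  by (simp add: g1_def G_0[OF a1 a2])

lemma g1_pos:
  assumes z: "norm z < 1"
  shows "0 < Re (em a1 a2 * g1 a1 a2 z)"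
proof (cases "z = 0")
  case True
  have "em a1 a2 * g1 a1 a2 z = of_real (bet a1 a2) * (em a1 a2 + exp (\<i> * of_real (phi a1 a2)))"
    using True em_cG_exp[OF a1 a2] by (simp add: g1_def G_deriv0[OF a1 a2] algebra_simps)
  moreover have "Re (em a1 a2 + exp (\<i> * of_real (phi a1 a2))) = 2 * cos (phi a1 a2)"
    by (simp add: em_def Re_exp)
  ultimately show ?thesis using bet_bounds[OF a1 a2] cos_phi_pos[OF a1 a2] by simp
next
  case False
  let ?u = "MM a1 a2 z"
  let ?c = "cG a1 a2"
  have h: "0 < Re (em a1 a2 * ?u)" by (rule MM_half[OF a1 a2 z])
  have z1: "1 - z \<noteq> 0" using z by auto
  have c1: "1 + ?c \<noteq> 0" by (rule one_plus_cG[OF a1 a2])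
  have e1: "?u - 1 = z * (1 + ?c) / (1 - z)" unfolding MM_def using z1 by (simp add: field_simps)
  have e2: "?u + ?c = (1 + ?c) / (1 - z)" unfolding MM_def using z1 by (simp add: field_simps)
  have u1: "?u \<noteq> 1" using e1 False z1 c1 by auto
  have uc: "?u + ?c \<noteq> 0" using e2 z1 c1 by auto
  have zz: "z = (?u - 1) / (?u + ?c)"
    unfolding e1 e2 by (subst div_div_cancel[OF z1]) (simp add: c1)
  have "g1 a1 a2 z = (exp (of_real (bet a1 a2) * Ln ?u) - 1) * (?u + ?c) / (?u - 1)"
    using False u1 uc by (subst g1_eq[OF False], subst G_eq[OF a1 a2 z], subst (2) zz) (simp add: field_simps)
  then show ?thesis using MS_u[OF a1 a2 h u1] by simp
qed

lemma Gt_primitive: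
  obtains \<Phi> where "\<And>z. z \<in> ball 0 1 \<Longrightarrow> (\<Phi> has_field_derivative g1 a1 a2 z) (at z)"
    "\<And>z. z \<in> ball 0 1 \<Longrightarrow> Gt a1 a2 z = \<Phi> z - \<Phi> 0"
proof -
  have "\<exists>\<Phi>. \<forall>z\<in>ball 0 1. (\<Phi> has_field_derivative g1 a1 a2 z) (at z within ball 0 1)"
    by (rule holomorphic_convex_primitive'[OF convex_ball open_ball g1_holo, of "\<exists>\<Phi>. \<forall>z\<in>ball 0 1. (\<Phi> has_field_derivative g1 a1 a2 z) (at z within ball 0 1)"])
      (rule exI, rule ballI)
  then obtain \<Phi> where P: "\<And>z. z \<in> ball 0 1 \<Longrightarrow> (\<Phi> has_field_derivative g1 a1 a2 z) (at z within ball 0 1)"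
    by blast
  have P': "(\<Phi> has_field_derivative g1 a1 a2 z) (at z)" if "z \<in> ball 0 1" for z
    using P[OF that] unfolding at_within_open[OF that open_ball] .
  have "Gt a1 a2 z = \<Phi> z - \<Phi> 0" if z: "z \<in> ball 0 1" for z
  proof (cases "z = 0")
    case True then show ?thesis by (simp add: Gt_def)
  next
    case False
    have seg: "closed_segment 0 z \<subseteq> ball 0 1"
      using z by (intro closed_segment_subset) auto
    have "(g1 a1 a2 has_contour_integral (\<Phi> (pathfinish (linepath 0 z)) - \<Phi> (pathstart (linepath 0 z)))) (linepath 0 z)"
      by (rule contour_integral_primitive[OF P]) (use seg in auto)
    then have "(g1 a1 a2 has_contour_integral (\<Phi> z - \<Phi> 0)) (linepath 0 z)" by simp
    then have "contour_integral (linepath 0 z) (g1 a1 a2) = \<Phi> z - \<Phi> 0"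
      by (rule contour_integral_unique)
    moreover have "contour_integral (linepath 0 z) (\<lambda>t. (G a1 a2 t - 1) / t) = contour_integral (linepath 0 z) (g1 a1 a2)"
      by (rule contour_integral_spike_finite_simple_path[of "{0}"]) (use False in \<open>auto simp: g1_eq\<close>)
    ultimately show ?thesis by (simp add: Gt_def)
  qed
  then show ?thesis using that[OF P'] by blast
qed

lemma Gt_deriv: "z \<in> ball 0 1 \<Longrightarrow> (Gt a1 a2 has_field_derivative g1 a1 a2 z) (at z)"
proof -
  assume z: "z \<in> ball 0 1"
  obtain \<Phi> where P: "\<And>z. z \<in> ball 0 1 \<Longrightarrow> (\<Phi> has_field_derivative g1 a1 a2 z) (at z)"
    "\<And>z. z \<in> ball 0 1 \<Longrightarrow> Gt a1 a2 z = \<Phi> z - \<Phi> 0" using Gt_primitive by blast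
  have "((\<lambda>z. \<Phi> z - \<Phi> 0) has_field_derivative g1 a1 a2 z) (at z)"
    using P(1)[OF z] by (auto intro!: derivative_eq_intros)
  then show ?thesis
    by (rule has_field_derivative_transform_within_open[where S="ball 0 1"]) (use z P(2) in auto)
qed

lemma Gt_holo: "Gt a1 a2 holomorphic_on ball 0 1"
  unfolding holomorphic_on_def field_differentiable_def using Gt_deriv has_field_derivative_at_within by blast

lemma Gt_0: "Gt a1 a2 0 = 0"
  by (simp add: Gt_def)

lemma Gt_inj: "inj_on (Gt a1 a2) (ball 0 1)"
proof (rule inj_onI, rule ccontr)
  fix z1 z2 assume z1: "z1 \<in> ball 0 1" and z2: "z2 \<in> ball 0 1" and eq: "Gt a1 a2 z1 = Gt a1 a2 z2"
    and ne: "z1 \<noteq> z2"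
  have seg: "closed_segment z1 z2 \<subseteq> ball 0 1"
    using z1 z2 by (intro closed_segment_subset) auto
  have "(g1 a1 a2 has_contour_integral (Gt a1 a2 z2 - Gt a1 a2 z1)) (linepath z1 z2)"
  proof -
    have "(g1 a1 a2 has_contour_integral (Gt a1 a2 (pathfinish (linepath z1 z2)) - Gt a1 a2 (pathstart (linepath z1 z2)))) (linepath z1 z2)"
    proof (rule contour_integral_primitive[of "ball 0 1"])
      fix x :: complex assume "x \<in> ball 0 1"
      then show "(Gt a1 a2 has_field_derivative g1 a1 a2 x) (at x within ball 0 1)"
        using Gt_deriv has_field_derivative_at_within by blast
    qed (use seg in auto)
    then show ?thesis by simp
  qed
  then have I: "((\<lambda>x. g1 a1 a2 (linepath z1 z2 x) * (z2 - z1)) has_integral 0) {0..1}"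
    using eq by (simp add: has_contour_integral_linepath)
  have I2: "((\<lambda>x. em a1 a2 / (z2 - z1) * (g1 a1 a2 (linepath z1 z2 x) * (z2 - z1))) has_integral 0) {0..1}"
    using has_integral_mult_right[OF I, of "em a1 a2 / (z2 - z1)"] by simp
  have d: "z2 - z1 \<noteq> 0" using ne by simp
  have I3: "((\<lambda>x. em a1 a2 * g1 a1 a2 (linepath z1 z2 x)) has_integral 0) {0..1}"
    using I2 d by simp
  have lin: "linepath z1 z2 x \<in> ball 0 1" if "x \<in> {0..1}" for x
    using seg that linepath_in_path[of x z1 z2] by auto
  have cont: "continuous_on {0..1} (\<lambda>x. em a1 a2 * g1 a1 a2 (linepath z1 z2 x))"
    by (intro continuous_intros continuous_on_compose2[OF holomorphic_on_imp_continuous_on[OF g1_holo]])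
      (use lin in auto)
  have "0 < Re (0::complex)"
    by (rule integral_Re_pos[OF cont _ I3]) (use lin g1_pos in auto)
  then show False by simp
qed

end

context
  fixes a1 a2 :: real and f :: "complex \<Rightarrow> complex"
  assumes a1: "0 < a1" "a1 \<le> 1" and a2: "0 < a2" "a2 \<le> 1"
    and sf: "strongly_starlike_t a1 a2 f"
begin

lemma f_props: "f holomorphic_on ball 0 1" "f 0 = 0" "deriv f 0 = 1"
  "\<And>z. z \<in> ball 0 1 \<Longrightarrow> z \<noteq> 0 \<Longrightarrow> f z \<noteq> 0 \<and> deriv f z \<noteq> 0 \<and>
        - (pi * a1 / 2) < Arg (z * deriv f z / f z) \<and> Arg (z * deriv f z / f z) < pi * a2 / 2"
  using sf unfolding strongly_starlike_t_def by blast+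

definition FF :: "complex \<Rightarrow> complex" where
  "FF z = (if z = 0 then deriv f 0 else (f z - f 0) / (z - 0))"

lemma FF_holo: "FF holomorphic_on ball 0 1"
  unfolding FF_def[abs_def] by (rule pole_lemma[OF f_props(1)]) auto

lemma FF_eq: "z \<noteq> 0 \<Longrightarrow> FF z = f z / z" and FF_0: "FF 0 = 1"
  by (simp_all add: FF_def f_props)

lemma FF_nz: "z \<in> ball 0 1 \<Longrightarrow> FF z \<noteq> 0"
  using f_props(4)[of z] by (cases "z = 0") (auto simp: FF_eq FF_0)

lemma f_FF: "z \<in> ball 0 1 \<Longrightarrow> f z = z * FF z"
  by (cases "z = 0") (auto simp: FF_eq f_props)

lemma Q_exists: obtains Q where "Q holomorphic_on ball 0 1" "\<And>z. z \<in> ball 0 1 \<Longrightarrow> exp (Q z) = FF z" "Q 0 = 0"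
proof -
  have "\<exists>g. g holomorphic_on ball 0 1 \<and> (\<forall>x\<in>ball 0 1. exp (g x) = FF x)"
    by (rule holomorphic_logarithm_exists[OF convex_ball open_ball FF_holo FF_nz, of 0
          "\<exists>g. g holomorphic_on ball 0 1 \<and> (\<forall>x\<in>ball 0 1. exp (g x) = FF x)"]) (auto intro!: exI)
  then obtain g where g: "g holomorphic_on ball 0 1" "\<And>x. x \<in> ball 0 1 \<Longrightarrow> exp (g x) = FF x" by blast
  have e0: "exp (g 0) = 1" using g(2)[of 0] FF_0 by simp
  show ?thesis
  proof (rule that[of "\<lambda>z. g z - g 0"])
    show "(\<lambda>z. g z - g 0) holomorphic_on ball 0 1" using g(1) by (intro holomorphic_intros)
    show "exp (g z - g 0) = FF z" if "z \<in> ball 0 1" for z using g(2)[OF that] e0 by (simp add: exp_diff)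
  qed simp
qed

end

lemma schwarz_scaled:
  fixes W :: "complex \<Rightarrow> complex"
  assumes holW: "W holomorphic_on ball 0 r" and r1: "0 < r1" "r1 < r" and W0: "W 0 = 0"
    and bd: "\<And>z. norm z \<le> r1 \<Longrightarrow> norm (W z) \<le> \<rho>" and z: "norm z \<le> r1"
  shows "norm (W z) \<le> \<rho> * norm z / r1"
proof -
  have rho0: "0 \<le> \<rho>" using bd[of 0] r1 W0 by simp
  show ?thesis
  proof (cases "norm z = r1")
    case True then show ?thesis using bd[OF z] r1 by simp
  next
    case False
    then have zl: "norm z < r1" using z by simp
    show ?thesis
    proof (cases "\<rho> = 0")
      case True then show ?thesis using bd[OF z] by simp
    next
      case False
      then have rp: "0 < \<rho>" using rho0 by simp
      have "norm (W z) / \<rho> \<le> norm z / r1"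
      proof (rule field_le_mult_one_interval)
        fix c :: real assume c: "0 < c" "c < 1"
        define \<phi> where "\<phi> = (\<lambda>\<xi>. of_real c * W (of_real r1 * \<xi>) / of_real \<rho>)"
        have sub: "(\<lambda>\<xi>::complex. of_real r1 * \<xi>) ` ball 0 1 \<subseteq> ball 0 r"
        proof
          fix y assume "y \<in> (\<lambda>\<xi>::complex. of_real r1 * \<xi>) ` ball 0 1"
          then obtain \<xi> where xi: "norm \<xi> < 1" "y = of_real r1 * \<xi>" by auto
          have "norm y = r1 * norm \<xi>" using xi r1 by (simp add: norm_mult)
          also have "\<dots> \<le> r1 * 1" using xi r1 by (intro mult_left_mono) auto
          finally show "y \<in> ball 0 r" using r1 by simp
        qed
        have h1: "(\<lambda>\<xi>. W (of_real r1 * \<xi>)) holomorphic_on ball 0 1"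
        proof -
          have "(\<lambda>\<xi>::complex. of_real r1 * \<xi>) holomorphic_on ball 0 1"
            by (intro holomorphic_intros)
          from holomorphic_on_compose_gen[OF this holW sub] show ?thesis by (simp add: o_def)
        qed
        have hol: "\<phi> holomorphic_on ball 0 1"
          unfolding \<phi>_def using h1 rp by (intro holomorphic_on_divide holomorphic_on_mult holomorphic_on_const) auto
        have "norm (\<phi> \<xi>) < 1" if "norm \<xi> < 1" for \<xi>
        proof -
          have "norm (of_real r1 * \<xi>) \<le> r1" using that r1 by (simp add: norm_mult mult_le_cancel_left1)
          then have "norm (W (of_real r1 * \<xi>)) \<le> \<rho>" by (rule bd)
          then have "norm (\<phi> \<xi>) \<le> c" unfolding \<phi>_def using c rp
            by (simp add: norm_mult norm_divide divide_le_eq mult_le_cancel_left1)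
          then show ?thesis using c by simp
        qed
        moreover have "\<phi> 0 = 0" unfolding \<phi>_def using W0 by simp
        moreover have xi: "norm (z / of_real r1) < 1" using zl r1 by (simp add: norm_divide)
        ultimately have "norm (\<phi> (z / of_real r1)) \<le> norm (z / of_real r1)"
          using Schwarz_Lemma(1)[OF hol] by blast
        moreover have "\<phi> (z / of_real r1) = of_real c * W z / of_real \<rho>" unfolding \<phi>_def using r1 by simp
        ultimately show "c * (norm (W z) / \<rho>) \<le> norm z / r1"
          using c rp r1 by (simp add: norm_mult norm_divide)
      qed
      then show ?thesis using rp r1 by (simp add: field_simps)
    qed
  qed
qed

lemma boundary_lemma:
  fixes W :: "complex \<Rightarrow> complex"
  assumes holW: "W holomorphic_on ball 0 r" and r1: "0 < r1" "r1 < r" and W0: "W 0 = 0"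
    and z0: "norm z0 = r1" and mx: "\<And>z. norm z \<le> r1 \<Longrightarrow> norm (W z) \<le> norm (W z0)"
    and nz: "W z0 \<noteq> 0"
  shows "Im (z0 * deriv W z0 / W z0) = 0" "1 \<le> Re (z0 * deriv W z0 / W z0)"
proof -
  define \<rho> where "\<rho> = norm (W z0)"
  have rp: "0 < \<rho>" using nz by (simp add: \<rho>_def)
  define H where "H = (\<lambda>s. W (z0 * exp s) * exp (- s) / W z0)"
  define D where "D = z0 * deriv W z0 / W z0 - 1"
  have z0b: "z0 \<in> ball 0 r" using z0 r1 by simp
  have DW: "(W has_field_derivative deriv W z0) (at (z0 * exp 0))"
    using holomorphic_derivI[OF holW open_ball z0b] by simp
  have Dz: "((\<lambda>s. z0 * exp s) has_field_derivative z0 * exp 0) (at 0)"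
    by (auto intro!: derivative_eq_intros)
  have DWc: "((\<lambda>s. W (z0 * exp s)) has_field_derivative deriv W z0 * (z0 * exp 0)) (at 0)"
    using DERIV_chain2[OF DW Dz] .
  have De: "((\<lambda>s. exp (- s)) has_field_derivative exp (- 0) * (- 1)) (at (0::complex))"
    by (auto intro!: derivative_eq_intros)
  have DH0: "(H has_field_derivative (deriv W z0 * (z0 * exp 0) * exp (- 0) + exp (- 0) * (- 1) * W (z0 * exp 0)) / W z0) (at 0)"
    unfolding H_def by (rule DERIV_cdivide[OF DERIV_mult[OF DWc De]])
  have DH: "(H has_field_derivative D) (at 0)"
    using DH0 nz by (simp add: D_def field_simps)
  have H0: "H 0 = 1" using nz by (simp add: H_def)
  \<comment> \<open>tangential direction\<close>
  have DHi: "((\<lambda>\<zeta>. H (\<i> * \<zeta>)) has_field_derivative D * \<i>) (at (of_real 0))"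
  proof -
    have a: "(H has_field_derivative D) (at ((\<lambda>\<zeta>. \<i> * \<zeta>) (of_real 0)))" using DH by simp
    have b: "((\<lambda>\<zeta>. \<i> * \<zeta>) has_field_derivative \<i>) (at (of_real 0))"
      by (auto intro!: derivative_eq_intros)
    show ?thesis using DERIV_chain2[of H D "\<lambda>\<zeta>. \<i> * \<zeta>" "of_real 0" "\<i>" UNIV, OF a b] by simp

  qed
  have T1: "((\<lambda>y. Re (H (\<i> * of_real y))) has_field_derivative Re (D * \<i>)) (at 0)"
    using has_field_derivative_Re[OF has_vector_derivative_real_field[OF DHi]] by simp
  have T2: "Re (H (\<i> * of_real y)) \<le> Re (H (\<i> * of_real 0))" for y
  proof -
    have "norm (z0 * exp (\<i> * of_real y)) = r1" using z0 by (simp add: norm_mult)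
    then have "norm (W (z0 * exp (\<i> * of_real y))) \<le> \<rho>" using mx \<rho>_def by simp
    then have "norm (H (\<i> * of_real y)) \<le> 1"
      using rp by (simp add: H_def norm_mult norm_divide \<rho>_def[symmetric] divide_le_eq)
    then show ?thesis using H0 complex_Re_le_cmod[of "H (\<i> * of_real y)"] by simp
  qed
  have "Re (D * \<i>) = 0"
    by (rule DERIV_local_max[OF T1, of 1]) (use T2 in auto)
  then have ImD: "Im D = 0" by simp
  \<comment> \<open>radial direction\<close>
  have R1: "((\<lambda>x. Re (H (of_real x))) has_field_derivative Re D) (at 0)"
    using has_field_derivative_Re[OF has_vector_derivative_real_field[of H D 0]] DH by simp
  have R2: "Re (H (of_real x)) \<le> 1" if x: "x \<le> 0" for x
  proof -
    have n: "norm (z0 * exp (of_real x)) = r1 * exp x" using z0 by (simp add: norm_mult)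
    have "r1 * exp x \<le> r1 * 1" using x r1 by (intro mult_left_mono) auto
    then have le: "norm (z0 * exp (of_real x)) \<le> r1" using n by simp
    have "norm (W (z0 * exp (of_real x))) \<le> \<rho> * norm (z0 * exp (of_real x)) / r1"
      by (rule schwarz_scaled[OF holW r1 W0 _ le]) (use mx \<rho>_def in auto)
    also have "\<dots> = \<rho> * exp x" using n r1 by simp
    finally have "norm (W (z0 * exp (of_real x))) \<le> \<rho> * exp x" .
    then have "norm (H (of_real x)) \<le> 1"
      using rp by (simp add: H_def norm_mult norm_divide \<rho>_def[symmetric] divide_le_eq exp_minus field_simps)
    then show ?thesis using complex_Re_le_cmod[of "H (of_real x)"] by simp
  qed
  have ReD: "0 \<le> Re D"
  proof (rule ccontr)
    assume "\<not> 0 \<le> Re D"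
    then have "Re D < 0" by simp
    from DERIV_neg_dec_left[OF R1 this] obtain d where d: "0 < d"
      "\<And>h. 0 < h \<Longrightarrow> h < d \<Longrightarrow> Re (H (of_real 0)) < Re (H (of_real (0 - h)))" by blast
    have "Re (H (of_real 0)) < Re (H (of_real (0 - d/2)))" using d(2)[of "d/2"] d(1) by simp
    moreover have "Re (H (of_real (0 - d/2))) \<le> 1" using d by (intro R2) simp
    ultimately show False using H0 by simp
  qed
  show "Im (z0 * deriv W z0 / W z0) = 0" using ImD by (simp add: D_def)
  show "1 \<le> Re (z0 * deriv W z0 / W z0)" using ReD by (simp add: D_def)
qed

lemma jack_core:
  fixes Q k kinv G \<omega> :: "complex \<Rightarrow> complex"
  assumes Qh: "Q holomorphic_on ball 0 1" and Q0: "Q 0 = 0"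
    and kh: "k holomorphic_on ball 0 1" and k0: "k 0 = 0"
    and kinv: "\<And>z. z \<in> ball 0 1 \<Longrightarrow> kinv (k z) = z" and kinvh: "kinv holomorphic_on k ` ball 0 1"
    and kopen: "open (k ` ball 0 1)"
    and kd: "\<And>\<zeta>. \<zeta> \<in> ball 0 1 \<Longrightarrow> \<zeta> * deriv k \<zeta> = G \<zeta> - 1"
    and Qd: "\<And>z. z \<in> ball 0 1 \<Longrightarrow> z * deriv Q z = G (\<omega> z) - 1"
    and om: "\<And>z. z \<in> ball 0 1 \<Longrightarrow> norm (\<omega> z) \<le> norm z"
    and star: "\<And>\<zeta> t. \<zeta> \<in> ball 0 1 \<Longrightarrow> 0 < t \<Longrightarrow> t \<le> 1 \<Longrightarrow>
                 \<exists>\<eta>. norm \<eta> \<le> norm \<zeta> \<and> G \<eta> = 1 + of_real t * (G \<zeta> - 1)"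
    and Ginj: "inj_on G (ball 0 1)"
  shows "\<forall>z\<in>ball 0 1. Q z \<in> k ` ball 0 1 \<and> norm (kinv (Q z)) \<le> norm z"
proof -
  define U where "U = ball 0 1 \<inter> Q -` (k ` ball 0 1)"
  have openU: "open U" unfolding U_def
    by (rule continuous_open_preimage[OF holomorphic_on_imp_continuous_on[OF Qh] open_ball kopen])
  have U1: "U \<subseteq> ball 0 1" unfolding U_def by auto
  define W where "W = (\<lambda>z. kinv (Q z))"
  have WU: "W z \<in> ball 0 1 \<and> k (W z) = Q z" if "z \<in> U" for z
  proof -
    from that obtain \<zeta> where \<zeta>: "\<zeta> \<in> ball 0 1" "Q z = k \<zeta>" unfolding U_def by auto
    then show ?thesis unfolding W_def using kinv by auto
  qed
  have Wh: "W holomorphic_on U"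
  proof -
    have "Q holomorphic_on U" using Qh U1 by (rule holomorphic_on_subset)
    moreover have "Q ` U \<subseteq> k ` ball 0 1" unfolding U_def by auto
    ultimately show ?thesis unfolding W_def using holomorphic_on_compose_gen[OF _ kinvh] by (simp add: o_def)
  qed
  have W0: "W 0 = 0" unfolding W_def using Q0 k0[symmetric] kinv[of 0] by simp
  have U0: "0 \<in> U" unfolding U_def using Q0 k0 by force
  \<comment> \<open>Jack's lemma argument\<close>
  have claimA: "\<forall>z\<in>ball 0 r. norm (W z) \<le> norm z" if r: "0 < r" "ball 0 r \<subseteq> U" for r
  proof (rule ballI, rule ccontr)
    fix z1 assume z1: "z1 \<in> ball 0 r" and bad: "\<not> norm (W z1) \<le> norm z1"
    have z10: "z1 \<noteq> 0" using bad W0 by auto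
    define r1 where "r1 = norm z1"
    have r1: "0 < r1" "r1 < r" using z10 z1 by (auto simp: r1_def)
    have Whr: "W holomorphic_on ball 0 r" using Wh r(2) by (rule holomorphic_on_subset)
    have cb: "cball 0 r1 \<subseteq> ball 0 r" using r1 by auto
    have contc: "continuous_on (cball 0 r1) W"
      using holomorphic_on_imp_continuous_on[OF Whr] cb by (rule continuous_on_subset)
    have "continuous_on (sphere 0 r1) (\<lambda>z. norm (W z))"
      using contc by (intro continuous_intros) (auto intro: continuous_on_subset)
    then obtain z0 where z0: "z0 \<in> sphere 0 r1" "\<And>z. z \<in> sphere 0 r1 \<Longrightarrow> norm (W z) \<le> norm (W z0)"
      using continuous_attains_sup[OF compact_sphere, of 0 r1 "\<lambda>z. norm (W z)"] r1 by fastforce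
    have mx: "norm (W z) \<le> norm (W z0)" if "norm z \<le> r1" for z
    proof (rule maximum_modulus_frontier[of W "cball 0 r1"])
      show "W holomorphic_on interior (cball 0 r1)"
        using Whr r1 by (auto intro: holomorphic_on_subset)
      show "continuous_on (closure (cball 0 r1)) W" using contc by simp
      show "z \<in> cball 0 r1" using that by simp
    qed (use z0 r1 in auto)
    have nz0: "norm z0 = r1" using z0 r1 by simp
    have gt: "r1 < norm (W z0)" using mx[of z1] bad r1_def by simp
    then have Wz0: "W z0 \<noteq> 0" using r1 by auto
    define m where "m = z0 * deriv W z0 / W z0"
    have mI: "Im m = 0" and mR: "1 \<le> Re m"
      using boundary_lemma[OF Whr r1 W0 nz0 mx Wz0] by (simp_all add: m_def)
    have mm: "m = of_real (Re m)" using mI by (simp add: complex_eq_iff)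
    define \<zeta>0 where "\<zeta>0 = W z0"
    have z0U: "z0 \<in> ball 0 r" using nz0 r1 by simp
    have z0B: "z0 \<in> ball 0 1" using z0U r(2) U1 by blast
    have \<zeta>0B: "\<zeta>0 \<in> ball 0 1" using WU z0U r(2) by (auto simp: \<zeta>0_def)
    have DW: "(W has_field_derivative deriv W z0) (at z0)"
      by (rule holomorphic_derivI[OF Whr open_ball z0U])
    have Dk: "(k has_field_derivative deriv k \<zeta>0) (at (W z0))"
      using holomorphic_derivI[OF kh open_ball \<zeta>0B] by (simp add: \<zeta>0_def)
    have "((\<lambda>z. k (W z)) has_field_derivative deriv k \<zeta>0 * deriv W z0) (at z0)"
      using DERIV_chain2[OF Dk DW] .
    then have "(Q has_field_derivative deriv k \<zeta>0 * deriv W z0) (at z0)"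
      by (rule has_field_derivative_transform_within_open[OF _ open_ball z0U])
        (use WU r(2) in auto)
    then have dQ: "deriv Q z0 = deriv k \<zeta>0 * deriv W z0" by (rule DERIV_imp_deriv)
    have "z0 * deriv Q z0 = deriv k \<zeta>0 * (z0 * deriv W z0)" using dQ by simp
    also have "z0 * deriv W z0 = m * \<zeta>0" using Wz0 by (simp add: m_def \<zeta>0_def)
    finally have "z0 * deriv Q z0 = m * (\<zeta>0 * deriv k \<zeta>0)" by (simp add: algebra_simps)
    then have eq: "G (\<omega> z0) - 1 = of_real (Re m) * (G \<zeta>0 - 1)"
      using Qd[OF z0B] kd[OF \<zeta>0B] mm by simp
    define t where "t = 1 / Re m"
    have t: "0 < t" "t \<le> 1" using mR by (auto simp: t_def)
    have omB: "\<omega> z0 \<in> ball 0 1" using om[OF z0B] z0B by auto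
    obtain \<eta> where \<eta>: "norm \<eta> \<le> norm (\<omega> z0)" "G \<eta> = 1 + of_real t * (G (\<omega> z0) - 1)"
      using star[OF omB t] by blast
    have "G \<eta> = G \<zeta>0" using \<eta>(2) eq mR by (simp add: t_def)
    moreover have \<eta>B: "\<eta> \<in> ball 0 1" using \<eta>(1) om[OF z0B] z0B by auto
    ultimately have "\<eta> = \<zeta>0" using Ginj \<zeta>0B by (auto dest: inj_onD)
    then have "norm (W z0) \<le> r1" using \<eta>(1) om[OF z0B] nz0 by (simp add: \<zeta>0_def)
    then show False using gt by simp
  qed
  define A where "A = {r. 0 \<le> r \<and> r \<le> 1 \<and> ball 0 r \<subseteq> U}"
  define R where "R = Sup A"
  have A0: "0 \<in> A" unfolding A_def by simp
  have bdA: "bdd_above A" by (rule bdd_aboveI[of _ 1]) (simp add: A_def)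
  have R01: "0 \<le> R" "R \<le> 1"
  proof -
    show "0 \<le> R" unfolding R_def by (rule cSup_upper[OF A0 bdA])
    have "A \<noteq> {}" using A0 by blast
    then show "R \<le> 1" unfolding R_def by (rule cSup_least) (simp add: A_def)
  qed
  have ballR: "ball 0 R \<subseteq> U"
  proof
    fix z :: complex assume "z \<in> ball 0 R"
    then have "norm z < Sup A" by (simp add: R_def)
    then obtain r where "r \<in> A" "norm z < r" using less_cSup_iff[OF _ bdA] A0 by blast
    then show "z \<in> U" unfolding A_def by auto
  qed
  have WR: "norm (W z) \<le> norm z" if "z \<in> ball 0 R" for z
  proof -
    have "0 < R" using that R01 by (cases "R = 0") auto
    then show ?thesis using claimA[of R] ballR that by blast
  qed
  have R1: "R = 1"
  proof (rule ccontr)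
    assume "R \<noteq> 1"
    then have Rl: "R < 1" using R01 by simp
    have cbU: "cball 0 R \<subseteq> U"
    proof
      fix z :: complex assume z: "z \<in> cball 0 R"
      show "z \<in> U"
      proof (cases "norm z < R")
        case True then show ?thesis using ballR by auto
      next
        case False
        then have nz: "norm z = R" using z by simp
        show ?thesis
        proof (cases "R = 0")
          case True then show ?thesis using nz U0 by simp
        next
          case False
          then have Rp: "0 < R" using R01 by simp
          have cbB: "cball 0 R \<subseteq> ball 0 1" using Rl by auto
          have "compact (k ` cball 0 R)"
            by (rule compact_continuous_image[OF continuous_on_subset[OF holomorphic_on_imp_continuous_on[OF kh] cbB] compact_cball])
          then have cl: "closed (k ` cball 0 R)" by (rule compact_imp_closed)
          have ev: "eventually (\<lambda>t. Q (of_real t * z) \<in> k ` cball 0 R) (at_left (1::real))"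
            using eventually_at_left_real[OF zero_less_one]
          proof (rule eventually_mono)
            fix t :: real assume t: "t \<in> {0<..<1}"
            have tz: "of_real t * z \<in> ball 0 R" using t nz Rp by (simp add: norm_mult)
            then have "of_real t * z \<in> U" using ballR by auto
            then have "k (W (of_real t * z)) = Q (of_real t * z)" using WU by auto
            moreover have "W (of_real t * z) \<in> cball 0 R" using WR[OF tz] tz by simp
            ultimately show "Q (of_real t * z) \<in> k ` cball 0 R" by (metis image_eqI)
          qed
          have zB: "z \<in> ball 0 1" using nz Rl by simp
          have c: "isCont Q z"
            using holomorphic_on_imp_continuous_on[OF Qh] zB continuous_on_eq_continuous_at[OF open_ball] by blast
          have "((\<lambda>t. of_real t * z) \<longlongrightarrow> of_real 1 * z) (at_left (1::real))"
            by (intro tendsto_intros)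
          then have tt: "((\<lambda>t. of_real t * z) \<longlongrightarrow> z) (at_left (1::real))" by simp
          have lim: "((\<lambda>t. Q (of_real t * z)) \<longlongrightarrow> Q z) (at_left (1::real))"
            using isCont_tendsto_compose[OF c tt] .
          have "Q z \<in> k ` cball 0 R"
            using Lim_in_closed_set[OF cl ev _ lim] by simp
          then show ?thesis unfolding U_def using zB cbB by auto
        qed
      qed
    qed
    obtain \<epsilon> where e: "\<epsilon> > 0" "(\<Union>x\<in>cball 0 R. ball x \<epsilon>) \<subseteq> U"
      using compact_subset_open_imp_ball_epsilon_subset[OF compact_cball openU cbU] by blast
    have "ball 0 (R + \<epsilon>) \<subseteq> U"
    proof
      fix y :: complex assume y: "y \<in> ball 0 (R + \<epsilon>)"
      show "y \<in> U"
      proof (cases "norm y \<le> R")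
        case True then show ?thesis using cbU by auto
      next
        case False
        define x where "x = of_real (R / norm y) * y"
        have y0: "y \<noteq> 0" using False R01 by auto
        have "norm x = \<bar>R / norm y\<bar> * norm y" unfolding x_def by (simp only: norm_mult norm_of_real)
        then have nx: "norm x = R" using y0 R01 by simp
        have "y - x = of_real (1 - R / norm y) * y" by (simp add: x_def algebra_simps)
        then have "norm (y - x) = \<bar>1 - R / norm y\<bar> * norm y" by (simp only: norm_mult norm_of_real)
        also have "\<bar>1 - R / norm y\<bar> = 1 - R / norm y" using False R01 by (simp add: divide_le_eq)
        also have "(1 - R / norm y) * norm y = norm y - R" using y0 by (simp add: field_simps)
        finally have "norm (y - x) = norm y - R" .
        then have "y \<in> ball x \<epsilon>" using y by (simp add: dist_norm norm_minus_commute)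
        moreover have "x \<in> cball 0 R" using nx by simp
        ultimately show ?thesis using e(2) by blast
      qed
    qed
    then have "min (R + \<epsilon>) 1 \<in> A" unfolding A_def using R01 e(1) by auto
    then have "min (R + \<epsilon>) 1 \<le> R" unfolding R_def by (rule cSup_upper[OF _ bdA])
    then show False using Rl e(1) by simp
  qed
  show ?thesis
  proof
    fix z :: complex assume z: "z \<in> ball 0 1"
    then have "z \<in> U" using ballR R1 by auto
    then show "Q z \<in> k ` ball 0 1 \<and> norm (kinv (Q z)) \<le> norm z"
      using WR[of z] z R1 unfolding U_def W_def by auto
  qed
qed

context
  fixes a1 a2 :: real and f :: "complex \<Rightarrow> complex"
  assumes a1: "0 < a1" "a1 \<le> 1" and a2: "0 < a2" "a2 \<le> 1"
    and sf: "strongly_starlike_t a1 a2 f"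
begin

lemma star_G:
  assumes \<zeta>: "\<zeta> \<in> ball 0 1" and t: "0 < t" "t \<le> 1"
  shows "\<exists>\<eta>. norm \<eta> \<le> norm \<zeta> \<and> G a1 a2 \<eta> = 1 + of_real t * (G a1 a2 \<zeta> - 1)"
proof -
  define \<psi> where "\<psi> = (\<lambda>\<xi>. Ginv a1 a2 (1 + of_real t * (G a1 a2 \<xi> - 1)))"
  have inS: "1 + of_real t * (G a1 a2 \<xi> - 1) \<in> SS a1 a2" if "\<xi> \<in> ball 0 1" for \<xi>
    using SS_segment[OF a1 a2 G_in_SS[OF a1 a2] _ ] t that by simp
  have h1: "(\<lambda>\<xi>. 1 + of_real t * (G a1 a2 \<xi> - 1)) holomorphic_on ball 0 1"
    using G_holo[OF a1 a2] by (intro holomorphic_intros)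
  have sub: "(\<lambda>\<xi>. 1 + of_real t * (G a1 a2 \<xi> - 1)) ` ball 0 1 \<subseteq> SS a1 a2" using inS by blast
  have hol: "\<psi> holomorphic_on ball 0 1"
    using holomorphic_on_compose_gen[OF h1 Ginv_holo[OF a1 a2] sub] unfolding \<psi>_def o_def .
  have p0: "\<psi> 0 = 0" unfolding \<psi>_def by (simp add: G_0[OF a1 a2] Ginv_1[OF a1 a2])
  have lt: "norm (\<psi> \<xi>) < 1" if "norm \<xi> < 1" for \<xi>
    unfolding \<psi>_def using Ginv_facts(3)[OF a1 a2 inS] that by simp
  have "norm (\<psi> \<zeta>) \<le> norm \<zeta>" using Schwarz_Lemma(1)[OF hol p0 lt] \<zeta> by simp
  moreover have "G a1 a2 (\<psi> \<zeta>) = 1 + of_real t * (G a1 a2 \<zeta> - 1)"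
    unfolding \<psi>_def using Ginv_facts(5)[OF a1 a2 inS[OF \<zeta>]] .
  ultimately show ?thesis by blast
qed

lemma G_inj: "inj_on (G a1 a2) (ball 0 1)"
  by (rule inj_on_inverseI[of _ "Ginv a1 a2"]) (simp add: Ginv_G[OF a1 a2])

lemma Gt_kd: "\<zeta> \<in> ball 0 1 \<Longrightarrow> \<zeta> * deriv (Gt a1 a2) \<zeta> = G a1 a2 \<zeta> - 1"
  using DERIV_imp_deriv[OF Gt_deriv[OF a1 a2]] g1_eq[OF a1 a2] G_0[OF a1 a2]
  by (cases "\<zeta> = 0") auto

lemma main_subord: "subordinate (\<lambda>z. if z = 0 then 1 else f z / z) (\<lambda>z. exp (Gt a1 a2 z))"
proof -
  obtain Q where Qh: "Q holomorphic_on ball 0 1" and eQ: "\<And>z. z \<in> ball 0 1 \<Longrightarrow> exp (Q z) = FF f z"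
    and Q0: "Q 0 = 0"
    using Q_exists[OF a1 a2 sf] by blast
  define P where "P = (\<lambda>z. 1 + z * deriv Q z)"
  have Ph: "P holomorphic_on ball 0 1" unfolding P_def using Qh by (intro holomorphic_intros) auto
  have PS: "P z \<in> SS a1 a2" if z: "z \<in> ball 0 1" for z
  proof (cases "z = 0")
    case True then show ?thesis using one_in_SS[OF a1 a2] by (simp add: P_def)
  next
    case False
    have DQ: "(Q has_field_derivative deriv Q z) (at z)" using holomorphic_derivI[OF Qh open_ball z] .
    have DF0: "((\<lambda>w. exp (Q w)) has_field_derivative FF f z * deriv Q z) (at z)"
      using DERIV_chain2[OF DERIV_exp DQ] eQ[OF z] by simp
    have DF: "(FF f has_field_derivative FF f z * deriv Q z) (at z)"
      by (rule has_field_derivative_transform_within_open[OF DF0 open_ball z]) (use eQ in auto)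
    have "((\<lambda>w. w * FF f w) has_field_derivative (1 * FF f z + (FF f z * deriv Q z) * z)) (at z)"
      using DERIV_mult[OF DERIV_ident DF] .
    then have "(f has_field_derivative (1 * FF f z + (FF f z * deriv Q z) * z)) (at z)"
      by (rule has_field_derivative_transform_within_open[OF _ open_ball z]) (use f_FF[OF a1 a2 sf] in auto)
    then have df: "deriv f z = FF f z * (1 + z * deriv Q z)" by (auto dest: DERIV_imp_deriv simp: algebra_simps)
    have fz: "f z = z * FF f z" by (rule f_FF[OF a1 a2 sf z])
    have Fnz: "FF f z \<noteq> 0" by (rule FF_nz[OF a1 a2 sf z])
    have "z * deriv f z / f z = P z" unfolding df fz P_def using False Fnz by (simp add: field_simps)
    moreover have "f z \<noteq> 0 \<and> deriv f z \<noteq> 0 \<and> - (pi * a1 / 2) < Arg (z * deriv f z / f z) \<and> Arg (z * deriv f z / f z) < pi * a2 / 2"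
      by (rule f_props(4)[OF a1 a2 sf z False])
    ultimately show ?thesis unfolding SS_iff[OF a1 a2] using False by auto
  qed
  define \<omega> where "\<omega> = (\<lambda>z. Ginv a1 a2 (P z))"
  have omh: "\<omega> holomorphic_on ball 0 1"
  proof -
    have "P ` ball 0 1 \<subseteq> SS a1 a2" using PS by blast
    from holomorphic_on_compose_gen[OF Ph Ginv_holo[OF a1 a2] this] show ?thesis unfolding \<omega>_def o_def .
  qed
  have om0: "\<omega> 0 = 0" unfolding \<omega>_def P_def by (simp add: Ginv_1[OF a1 a2])
  have omlt: "norm (\<omega> z) < 1" if "norm z < 1" for z
    unfolding \<omega>_def using Ginv_facts(3)[OF a1 a2 PS] that by simp
  have om: "norm (\<omega> z) \<le> norm z" if "z \<in> ball 0 1" for z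
    using Schwarz_Lemma(1)[OF omh om0 omlt] that by simp
  have Qd: "z * deriv Q z = G a1 a2 (\<omega> z) - 1" if "z \<in> ball 0 1" for z
    unfolding \<omega>_def using Ginv_facts(5)[OF a1 a2 PS[OF that]] by (simp add: P_def)
  obtain kinv where kinvh: "kinv holomorphic_on (Gt a1 a2 ` ball 0 1)"
    and kinv: "\<And>z. z \<in> ball 0 1 \<Longrightarrow> kinv (Gt a1 a2 z) = z"
    using holomorphic_has_inverse[OF Gt_holo[OF a1 a2] open_ball Gt_inj[OF a1 a2]] by blast
  have kopen: "open (Gt a1 a2 ` ball 0 1)"
    by (rule open_mapping_thm3[OF Gt_holo[OF a1 a2] open_ball Gt_inj[OF a1 a2]])
  have core: "\<forall>z\<in>ball 0 1. Q z \<in> Gt a1 a2 ` ball 0 1 \<and> norm (kinv (Q z)) \<le> norm z"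
    by (rule jack_core[OF Qh Q0 Gt_holo[OF a1 a2] Gt_0[OF a1 a2] kinv kinvh kopen Gt_kd Qd om star_G G_inj])
  define w where "w = (\<lambda>z. kinv (Q z))"
  show ?thesis unfolding subordinate_def
  proof (intro exI[of _ w] conjI ballI)
    show "w holomorphic_on ball 0 1"
      unfolding w_def using holomorphic_on_compose_gen[OF Qh kinvh] core by (auto simp: o_def)
    show "w 0 = 0" unfolding w_def using Q0 Gt_0[OF a1 a2] kinv[of 0] by simp
    fix z :: complex assume z: "z \<in> ball 0 1"
    show "norm (w z) < 1" unfolding w_def using core z by fastforce
    obtain \<zeta> where \<zeta>: "\<zeta> \<in> ball 0 1" "Q z = Gt a1 a2 \<zeta>" using core z by blast
    have "Gt a1 a2 (w z) = Q z" unfolding w_def using \<zeta> kinv by simp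
    then have "exp (Gt a1 a2 (w z)) = FF f z" using eQ[OF z] by simp
    then show "(if z = 0 then 1 else f z / z) = exp (Gt a1 a2 (w z))"
      by (simp add: FF_eq[OF a1 a2 sf] FF_0[OF a1 a2 sf])
  qed
qed

end

theorem corollary2p2:
  fixes a1 a2 :: real and f :: "complex \<Rightarrow> complex"
  assumes "0 < a1" "a1 \<le> 1" "0 < a2" "a2 \<le> 1"
    and "strongly_starlike_t a1 a2 f"
  shows "subordinate (\<lambda>z. if z = 0 then 1 else f z / z) (\<lambda>z. exp (Gt a1 a2 z))"
  using main_subord[OF assms] .

end
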